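(* Let $\mathcal J$ be an instance with locations $c_1,\dots,c_k$, and for $i\in[k]$ let $C_i$ be the set of data points located at $c_i$; assume each $C_i$ is $3$-approximately fair. Consider a fairlet decomposition for $(C_1,\dots,C_k)$: for each $i$, $F_i\subseteq C_i$ is a maximal exactly fair subset of $C_i$, decomposed into $|F_i|/f$ fairlets, and $P_i=C_i\setminus F_i$ is the set of problematic points. Then $|P_i|<4f$ for every $i\in[k]$.
   Context: Data points $X$ are partitioned into groups $X_1,\dots,X_\ell$. A set $S$ is exactly fair if $|S\cap X_j|=\frac{|X_j|}{|X|}|S|$ for all $j$. A fairlet is a minimum-size non-empty exactly fair subset of $X$; its size is $f$ and it contains $f_j\ge1$ points of group $j$ (so $f_j/f=|X_j|/|X|$). A set $S$ is $\gamma$-approximately fair if $\bigl||S\cap X_j|-\frac{f_j}{f}|S|\bigr|\le\gamma$ for all $j\in[\ell]$. *)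

theory Defs
  imports Complex_Main
begin

text \<open>Data points X, groups G 0, ..., G (l-1) (a partition of X).\<close>

definition exactly_fair :: "'a set \<Rightarrow> (nat \<Rightarrow> 'a set) \<Rightarrow> nat \<Rightarrow> 'a set \<Rightarrow> bool" where
  "exactly_fair X G l S \<longleftrightarrow>
     (\<forall>j<l. real (card (S \<inter> G j)) = real (card (G j)) / real (card X) * real (card S))"

definition is_fairlet :: "'a set \<Rightarrow> (nat \<Rightarrow> 'a set) \<Rightarrow> nat \<Rightarrow> 'a set \<Rightarrow> bool" where
  "is_fairlet X G l S \<longleftrightarrow> S \<subseteq> X \<and> S \<noteq> {} \<and> exactly_fair X G l S \<and>
     (\<forall>T. T \<subseteq> X \<and> T \<noteq> {} \<and> exactly_fair X G l T \<longrightarrow> card S \<le> card T)"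

definition fairlet_size :: "'a set \<Rightarrow> (nat \<Rightarrow> 'a set) \<Rightarrow> nat \<Rightarrow> nat" where
  "fairlet_size X G l = Min {card S | S. S \<subseteq> X \<and> S \<noteq> {} \<and> exactly_fair X G l S}"

text \<open>f_j = number of points of group j in a fairlet; f_j / f = |X_j| / |X|.\<close>
definition fairlet_count :: "'a set \<Rightarrow> (nat \<Rightarrow> 'a set) \<Rightarrow> nat \<Rightarrow> nat \<Rightarrow> nat" where
  "fairlet_count X G l j = card ((SOME S. is_fairlet X G l S) \<inter> G j)"

definition approx_fair :: "'a set \<Rightarrow> (nat \<Rightarrow> 'a set) \<Rightarrow> nat \<Rightarrow> real \<Rightarrow> 'a set \<Rightarrow> bool" where
  "approx_fair X G l \<gamma> S \<longleftrightarrow>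
     (\<forall>j<l. \<bar>real (card (S \<inter> G j)) -
             real (fairlet_count X G l j) / real (fairlet_size X G l) * real (card S)\<bar> \<le> \<gamma>)"

end

theory Submission
  imports Defs
begin

theorem lemma3:
  fixes X :: "'a set" and G :: "nat \<Rightarrow> 'a set" and l k :: nat
    and C F :: "nat \<Rightarrow> 'a set"
  assumes finX: "finite X" and neX: "X \<noteq> {}"
    and groups_part: "(\<Union>j<l. G j) = X"
    and groups_disj: "\<forall>j<l. \<forall>j'<l. j \<noteq> j' \<longrightarrow> G j \<inter> G j' = {}"
    and groups_ne: "\<forall>j<l. G j \<noteq> {}"
    and locs_part: "(\<Union>i<k. C i) = X"
    and locs_disj: "\<forall>i<k. \<forall>i'<k. i \<noteq> i' \<longrightarrow> C i \<inter> C i' = {}"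
    and approx: "\<forall>i<k. approx_fair X G l 3 (C i)"
    and F_sub: "\<forall>i<k. F i \<subseteq> C i"
    and F_fair: "\<forall>i<k. exactly_fair X G l (F i)"
    and F_max: "\<forall>i<k. \<not> (\<exists>H. F i \<subset> H \<and> H \<subseteq> C i \<and> exactly_fair X G l H)"
  shows "\<forall>i<k. card (C i - F i) < 4 * fairlet_size X G l"
proof (intro allI impI)
  fix i assume ik: "i < k"
  define M where "M = {card S | S. S \<subseteq> X \<and> S \<noteq> {} \<and> exactly_fair X G l S}"
  have Xfair: "exactly_fair X G l X"
  proof -
    have "\<forall>j<l. X \<inter> G j = G j" using groups_part by blast
    thus ?thesis using neX finX by (simp add: exactly_fair_def)
  qed
  have Mfin: "finite M"
  proof -
    have "M \<subseteq> card ` Pow X" unfolding M_def by auto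
    thus ?thesis using finX by (meson finite_Pow_iff finite_imageI finite_subset)
  qed
  have "card X \<in> M" unfolding M_def using Xfair neX by auto
  hence MinM: "Min M \<in> M" using Mfin Min_in by blast
  have Mchar: "\<forall>m\<in>M. \<exists>S. S \<subseteq> X \<and> S \<noteq> {} \<and> exactly_fair X G l S \<and> card S = m"
    unfolding M_def by blast
  obtain S1 where S1: "S1 \<subseteq> X" "S1 \<noteq> {}" "exactly_fair X G l S1" "card S1 = Min M"
    using Mchar MinM by blast
  have "is_fairlet X G l S1"
  proof -
    have "card S1 \<le> card T" if "T \<subseteq> X" "T \<noteq> {}" "exactly_fair X G l T" for T
    proof -
      have "card T \<in> M" unfolding M_def using that by blast
      thus ?thesis using S1(4) Mfin Min_le by simp
    qed
    thus ?thesis unfolding is_fairlet_def using S1 by blast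
  qed
  hence isf: "is_fairlet X G l (SOME S. is_fairlet X G l S)" by (rule someI)
  define S0 where "S0 = (SOME S. is_fairlet X G l S)"
  have S0f: "is_fairlet X G l S0" using isf unfolding S0_def .
  have S0: "S0 \<subseteq> X" "S0 \<noteq> {}" "exactly_fair X G l S0"
    using S0f unfolding is_fairlet_def by blast+
  have "card S0 \<le> card S1" using S0f S1 unfolding is_fairlet_def by blast
  moreover have "Min M \<le> card S0"
  proof -
    have "card S0 \<in> M" unfolding M_def using S0 by blast
    thus ?thesis using Mfin Min_le by simp
  qed
  ultimately have fS0: "fairlet_size X G l = card S0"
    using S1(4) unfolding fairlet_size_def M_def[symmetric] by simp
  define f where "f = card S0"
  have finS0: "finite S0" using S0 finX finite_subset by blast
  have fpos: "f > 0" using S0 finS0 unfolding f_def by auto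
  define fc where "fc = (\<lambda>j. card (S0 \<inter> G j))"
  have fc_eq: "fairlet_count X G l j = fc j" for j
    unfolding fairlet_count_def fc_def S0_def by simp
  have Xpos: "real (card X) > 0" using finX neX by (simp add: card_gt_0_iff)
  have fc_real: "real (fc j) = real (card (G j)) / real (card X) * real f" if "j < l" for j
    using S0(3) that unfolding exactly_fair_def fc_def f_def by auto
  have ratio: "real (fc j) / real f = real (card (G j)) / real (card X)" if "j < l" for j
    using fc_real[OF that] fpos by simp
  have fc_ge1: "fc j \<ge> 1" if "j < l" for j
  proof -
    have "G j \<subseteq> X" using groups_part that by blast
    hence "card (G j) > 0" using groups_ne that finX
      by (meson card_gt_0_iff finite_subset)
    hence "real (fc j) > 0" using fc_real[OF that] Xpos fpos by simp
    thus ?thesis by simp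
  qed
  have sum_fc: "(\<Sum>j<l. fc j) = f"
  proof -
    have "S0 = (\<Union>j<l. S0 \<inter> G j)" using S0(1) groups_part by blast
    hence "card S0 = card (\<Union>j<l. S0 \<inter> G j)" by simp
    also have "\<dots> = (\<Sum>j<l. card (S0 \<inter> G j))"
      using finS0 groups_disj by (intro card_UN_disjoint) auto
    finally show ?thesis unfolding fc_def f_def by simp
  qed
  define P where "P = C i - F i"
  have CX: "C i \<subseteq> X" using locs_part ik by blast
  have finC: "finite (C i)" using CX finX finite_subset by blast
  have FC: "F i \<subseteq> C i" using F_sub ik by blast
  have finF: "finite (F i)" using FC finC finite_subset by blast
  show "card (C i - F i) < 4 * fairlet_size X G l"
  proof (rule ccontr)
    assume "\<not> ?thesis"
    hence Pbig: "real (card P) \<ge> 4 * real f" unfolding P_def fS0 f_def by simp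
    have Pj: "card (P \<inter> G j) \<ge> fc j" if j: "j < l" for j
    proof -
      have a: "\<bar>real (card (C i \<inter> G j)) - real (fc j) / real f * real (card (C i))\<bar> \<le> 3"
        using approx ik j unfolding approx_fair_def fc_eq fS0 f_def by auto
      have b: "real (card (F i \<inter> G j)) = real (fc j) / real f * real (card (F i))"
        using F_fair ik j ratio[OF j] unfolding exactly_fair_def by auto
      have c: "card (C i \<inter> G j) = card (F i \<inter> G j) + card (P \<inter> G j)"
      proof -
        have "C i \<inter> G j = (F i \<inter> G j) \<union> (P \<inter> G j)" using FC unfolding P_def by blast
        moreover have "(F i \<inter> G j) \<inter> (P \<inter> G j) = {}" unfolding P_def by blast
        ultimately show ?thesis using finC
          by (metis card_Un_disjoint finite_Int finite_Un)
      qed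
      have d: "card (C i) = card (F i) + card P"
        unfolding P_def using FC finC
        by (metis card_Diff_subset finF card_mono le_add_diff_inverse)
      define r where "r = real (fc j) / real f"
      have r0: "r \<ge> 0" unfolding r_def by simp
      have "real (card (P \<inter> G j)) \<ge> r * real (card P) - 3"
        using a b c d unfolding r_def[symmetric] by (simp add: algebra_simps abs_if split: if_splits)
      moreover have "r * real (card P) \<ge> r * (4 * real f)" using Pbig r0 by (simp add: mult_left_mono)
      moreover have "r * real f = real (fc j)" unfolding r_def using fpos by simp
      moreover have "real (fc j) \<ge> 1" using fc_ge1[OF j] by simp
      ultimately have "real (card (P \<inter> G j)) \<ge> real (fc j)" by (simp add: algebra_simps)
      thus ?thesis by simp
    qed
    have ex: "\<exists>T. T \<subseteq> P \<inter> G j \<and> card T = fc j" if "j < l" for j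
      using obtain_subset_with_card_n[OF Pj[OF that]] by metis
    have "\<forall>j. \<exists>T. j < l \<longrightarrow> T \<subseteq> P \<inter> G j \<and> card T = fc j"
      using ex by blast
    then obtain T where T0: "\<forall>j. j < l \<longrightarrow> T j \<subseteq> P \<inter> G j \<and> card (T j) = fc j"
      using choice[of "\<lambda>j T. j < l \<longrightarrow> T \<subseteq> P \<inter> G j \<and> card T = fc j"] by blast
    have T: "T j \<subseteq> P \<inter> G j \<and> card (T j) = fc j" if "j < l" for j
      using T0 that by blast
    have finP: "finite P" unfolding P_def using finC by simp
    have finT: "finite (T j)" if "j < l" for j using T[OF that] finP finite_subset by blast
    define TT where "TT = (\<Union>j<l. T j)"
    have finTT: "finite TT" unfolding TT_def using finT by auto
    have cardTT: "card TT = f"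
    proof -
      have disj: "\<forall>a\<in>{..<l}. \<forall>b\<in>{..<l}. a \<noteq> b \<longrightarrow> T a \<inter> T b = {}"
      proof (intro ballI impI)
        fix a b assume "a \<in> {..<l}" "b \<in> {..<l}" "a \<noteq> b"
        moreover have "T a \<subseteq> G a" "T b \<subseteq> G b" using T \<open>a \<in> {..<l}\<close> \<open>b \<in> {..<l}\<close> by auto
        ultimately show "T a \<inter> T b = {}" using groups_disj by blast
      qed
      have "card TT = (\<Sum>j<l. card (T j))" unfolding TT_def
        using finT disj by (intro card_UN_disjoint) auto
      also have "\<dots> = (\<Sum>j<l. fc j)" using T by simp
      finally show ?thesis using sum_fc by simp
    qed
    have TTP: "TT \<subseteq> P" unfolding TT_def using T by blast
    define H where "H = F i \<union> TT"
    have FTT: "F i \<inter> TT = {}" using TTP unfolding P_def by blast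
    have "TT \<noteq> {}" using cardTT fpos by auto
    hence sub: "F i \<subset> H" unfolding H_def using FTT by blast
    have HC: "H \<subseteq> C i" unfolding H_def using FC TTP P_def by blast
    have cardH: "card H = card (F i) + f" unfolding H_def using FTT finF finTT cardTT
      by (simp add: card_Un_disjoint)
    have "exactly_fair X G l H" unfolding exactly_fair_def
    proof (intro allI impI)
      fix j assume j: "j < l"
      have "TT \<inter> G j = T j"
      proof
        show "T j \<subseteq> TT \<inter> G j" using T[OF j] unfolding TT_def using j by blast
        show "TT \<inter> G j \<subseteq> T j"
        proof
          fix x assume "x \<in> TT \<inter> G j"
          then obtain j' where j': "j' < l" "x \<in> T j'" "x \<in> G j" unfolding TT_def by blast
          hence "x \<in> G j'" using T by blast
          hence "j' = j" using groups_disj j j' by blast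
          thus "x \<in> T j" using j' by simp
        qed
      qed
      hence "H \<inter> G j = (F i \<inter> G j) \<union> T j" unfolding H_def by blast
      moreover have "(F i \<inter> G j) \<inter> T j = {}" using FTT T[OF j] unfolding TT_def using j by blast
      ultimately have "card (H \<inter> G j) = card (F i \<inter> G j) + fc j"
        using finF finT[OF j] T[OF j] by (simp add: card_Un_disjoint)
      moreover have "real (card (F i \<inter> G j)) = real (card (G j)) / real (card X) * real (card (F i))"
        using F_fair ik j unfolding exactly_fair_def by auto
      ultimately show "real (card (H \<inter> G j)) = real (card (G j)) / real (card X) * real (card H)"
      proof -
        define q where "q = real (card (G j)) / real (card X)"
        have e1: "real (card (H \<inter> G j)) = real (card (F i \<inter> G j)) + real (fc j)"
          using \<open>card (H \<inter> G j) = card (F i \<inter> G j) + fc j\<close> by simp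
        have e2: "real (card (F i \<inter> G j)) = q * real (card (F i))" using F_fair ik j
          unfolding exactly_fair_def q_def by auto
        have e3: "real (fc j) = q * real f" using fc_real[OF j] unfolding q_def .
        have e4: "real (card H) = real (card (F i)) + real f" using cardH by simp
        have "real (card (H \<inter> G j)) = q * real (card H)"
          using e1 e2 e3 e4 by (simp add: distrib_left)
        thus ?thesis unfolding q_def .
      qed
    qed
    thus False using F_max ik sub HC by blast
  qed
qed

end
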